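(* Consider the four-player team game of dominoes described in the context. Over all possible deals and all possible legal games that end in a tranca, the largest number of points that the winning team can obtain is exactly $107$. That is, there exists a deal and a legal game ending in a tranca in which the winning team obtains $107$ points, and in every legal game ending in a tranca the winning team obtains at most $107$ points.
   Context: Domino tiles: the set of tiles consists of the 28 unordered pairs $[a,b]=[b,a]$ with $a,b\in\{0,1,\dots,6\}$; the number of points (pips) of $[a,b]$ is $a+b$. Four players, numbered 1 to 4, play; players 1 and 3 form one team and players 2 and 4 the other. The 28 tiles are dealt, 7 to each player (the initial hands). Players take turns in cyclic order $1,2,3,4,1,\dots$. The starting player places any one of their tiles on the table, forming a line of tiles (the board) with two open ends. On each subsequent turn, the player whose turn it is must, if they hold a tile containing a number equal to the number shown at one of the two open ends, place such a tile at that end (with equal numbers adjacent), the other number of the tile becoming the new open end; if they hold no such tile, they pass. A game ends either when a player places their last tile, or in a tranca (blocked game): a position in which no player holds a tile that can be placed. In a game ending in a tranca, the team whose two players' remaining tiles have the smaller total number of pips wins, and it obtains as points the total number of pips on the tiles remaining in the hands of the two players of the other (losing) team. *)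

theory Defs
  imports Main
begin

text \<open>Tiles [a,b] are represented as ordered pairs (a,b) with a \<le> b \<le> 6.
  Players 1,2,3,4 are represented by indices 0,1,2,3; team {0,2} (players 1,3)
  and team {1,3} (players 2,4).\<close>

type_synonym tile = "nat \<times> nat"

definition tiles :: "tile set" where
  "tiles = {(a, b). a \<le> b \<and> b \<le> 6}"

definition pips :: "tile \<Rightarrow> nat" where
  "pips t = fst t + snd t"

definition has_num :: "nat \<Rightarrow> tile \<Rightarrow> bool" where
  "has_num n t = (fst t = n \<or> snd t = n)"

definition other_num :: "nat \<Rightarrow> tile \<Rightarrow> nat" where
  "other_num n t = (if fst t = n then snd t else fst t)"

text \<open>A state: the hands of the players and the two open ends of the board
  (None = empty board, before the first tile).\<close>
type_synonym state = "(nat \<Rightarrow> tile set) \<times> (nat \<times> nat) option"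

definition is_deal :: "(nat \<Rightarrow> tile set) \<Rightarrow> bool" where
  "is_deal h = ((\<forall>p<4. h p \<subseteq> tiles \<and> card (h p) = 7) \<and>
               (\<forall>p<4. \<forall>q<4. p \<noteq> q \<longrightarrow> h p \<inter> h q = {}) \<and>
               (\<Union>p<4. h p) = tiles)"

definition step :: "nat \<Rightarrow> state \<Rightarrow> state \<Rightarrow> bool" where
  "step p s s' = (case snd s of
      None \<Rightarrow> (\<exists>x\<in>fst s p. fst s' = (fst s)(p := fst s p - {x}) \<and> snd s' = Some (fst x, snd x))
    | Some (l, r) \<Rightarrow>
        (\<exists>x\<in>fst s p. has_num l x \<and> fst s' = (fst s)(p := fst s p - {x}) \<and> snd s' = Some (other_num l x, r))
      \<or> (\<exists>x\<in>fst s p. has_num r x \<and> fst s' = (fst s)(p := fst s p - {x}) \<and> snd s' = Some (l, other_num r x))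
      \<or> ((\<not> (\<exists>x\<in>fst s p. has_num l x \<or> has_num r x)) \<and> s' = s))"

definition blocked :: "state \<Rightarrow> bool" where
  "blocked s = (\<exists>l r. snd s = Some (l, r) \<and>
                 (\<forall>p<4. \<not> (\<exists>x\<in>fst s p. has_num l x \<or> has_num r x)))"

text \<open>A legal game (list of successive states) ending in a tranca: starts from a deal
  with empty board, every turn is legal, no player ever runs out of tiles (so the game
  never ends by domino), no earlier position is a tranca, and the last position is one.\<close>
definition tranca_game :: "state list \<Rightarrow> bool" where
  "tranca_game ss = (ss \<noteq> [] \<and> is_deal (fst (hd ss)) \<and> snd (hd ss) = None \<and>
     (\<forall>k < length ss - 1. step (k mod 4) (ss ! k) (ss ! (k + 1))) \<and>
     (\<forall>k < length ss. \<forall>p<4. fst (ss ! k) p \<noteq> {}) \<and>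
     (\<forall>k < length ss - 1. \<not> blocked (ss ! k)) \<and>
     blocked (last ss))"

definition team_pips :: "(nat \<Rightarrow> tile set) \<Rightarrow> nat set \<Rightarrow> nat" where
  "team_pips h T = (\<Sum>p\<in>T. \<Sum>x\<in>h p. pips x)"

text \<open>Points obtained by the winning team (None if the totals tie: no winner).\<close>
definition winner_points :: "state \<Rightarrow> nat option" where
  "winner_points s = (let A = team_pips (fst s) {0, 2}; B = team_pips (fst s) {1, 3} in
     if A < B then Some B else if B < A then Some A else None)"

end

theory Submission
  imports Defs
begin


definition W :: "nat set \<Rightarrow> tile set" where
  "W A = {(x,y). x \<in> A \<and> y \<in> A \<and> x \<le> y}"

definition mk :: "nat \<Rightarrow> nat \<Rightarrow> tile" where
  "mk z y = (min z y, max z y)"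

lemma W_insert: "W (insert z A) = W A \<union> mk z ` insert z A"
proof (rule set_eqI)
  fix t :: tile
  obtain a b where t: "t = (a,b)" by (cases t)
  show "t \<in> W (insert z A) \<longleftrightarrow> t \<in> W A \<union> mk z ` insert z A"
  proof
    assume "t \<in> W (insert z A)"
    then have ab: "a \<in> insert z A" "b \<in> insert z A" "a \<le> b" unfolding t W_def by auto
    show "t \<in> W A \<union> mk z ` insert z A"
    proof (cases "a = z")
      case True
      then have "t = mk z b" using ab unfolding t mk_def by auto
      then show ?thesis using ab by blast
    next
      case False
      show ?thesis
      proof (cases "b = z")
        case True
        then have "t = mk z a" using ab unfolding t mk_def by auto
        then show ?thesis using ab by blast
      next
        case False
        then have "t \<in> W A" using ab \<open>a \<noteq> z\<close> unfolding t W_def by auto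
        then show ?thesis by blast
      qed
    qed
  next
    assume "t \<in> W A \<union> mk z ` insert z A"
    then show "t \<in> W (insert z A)" unfolding W_def mk_def t by (auto simp: min_def max_def split: if_splits)
  qed
qed

lemma pips_mk: "pips (mk z y) = z + y"
  unfolding mk_def pips_def by (simp add: min_def max_def)

lemma W_finite: "finite A \<Longrightarrow> finite (W A)"
proof -
  assume "finite A"
  have "W A \<subseteq> A \<times> A" unfolding W_def by auto
  then show ?thesis using \<open>finite A\<close> by (meson finite_SigmaI finite_subset)
qed

lemma mk_inj: "inj_on (mk z) B"
  unfolding inj_on_def mk_def by (auto simp: min_def max_def split: if_splits)

lemma W_disj: "z \<notin> A \<Longrightarrow> W A \<inter> mk z ` insert z A = {}"
  unfolding W_def mk_def by (auto simp: min_def max_def split: if_splits)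

lemma W_card_sum: "finite A \<Longrightarrow> 2 * card (W A) = card A * (card A + 1) \<and>
   (\<Sum>t\<in>W A. pips t) = (card A + 1) * (\<Sum>A)"
proof (induction A rule: finite_induct)
  case empty
  then show ?case by (simp add: W_def)
next
  case (insert z A)
  have fi: "finite (W A)" using insert W_finite by blast
  have fi2: "finite (mk z ` insert z A)" using insert by blast
  have c2: "card (mk z ` insert z A) = card A + 1"
    using card_image[OF mk_inj[of z "insert z A"]] insert by simp
  have s2: "(\<Sum>t\<in>mk z ` insert z A. pips t) = (\<Sum>y\<in>insert z A. z + y)"
    using sum.reindex[OF mk_inj[of z "insert z A"], of pips]
    by (simp add: pips_mk)
  also have "\<dots> = (card A + 1) * z + (z + \<Sum>A)"
    using insert by (simp add: sum.distrib)
  finally have s2': "(\<Sum>t\<in>mk z ` insert z A. pips t) = (card A + 1) * z + (z + \<Sum>A)" .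
  have cw: "card (W (insert z A)) = card (W A) + (card A + 1)"
    unfolding W_insert using card_Un_disjoint[OF fi fi2 W_disj[OF insert(2)]] c2 by simp
  have sw: "(\<Sum>t\<in>W (insert z A). pips t) = (\<Sum>t\<in>W A. pips t) + (card A + 1) * z + (z + \<Sum>A)"
    unfolding W_insert using sum.union_disjoint[OF fi fi2 W_disj[OF insert(2)], of pips] s2' by simp
  show ?case using insert cw sw by (simp add: algebra_simps)
qed

definition nums :: "tile \<Rightarrow> nat set" where "nums t = {fst t, snd t}"
definition Av :: "tile set \<Rightarrow> nat set" where "Av S = (\<Union>t\<in>S. nums t)"

definition D7 :: "nat set" where "D7 = {0,1,2,3,4,5,6}"

lemma tiles_D7: "t \<in> tiles \<Longrightarrow> fst t \<in> D7 \<and> snd t \<in> D7 \<and> fst t \<le> snd t"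
  unfolding tiles_def D7_def by auto

lemma Av_D7: "S \<subseteq> tiles \<Longrightarrow> Av S \<subseteq> D7"
  unfolding Av_def nums_def using tiles_D7 by blast

lemma finite_D7: "finite D7" unfolding D7_def by simp

lemma card_D7: "card D7 = 7" unfolding D7_def by simp

lemma sum_D7: "\<Sum>D7 = 21" unfolding D7_def by simp

lemma S_W: "S \<subseteq> tiles \<Longrightarrow> S \<subseteq> W (Av S)"
  unfolding W_def Av_def nums_def using tiles_D7 by fastforce

lemma W_tiles: "A \<subseteq> D7 \<Longrightarrow> W A \<subseteq> tiles"
  unfolding W_def tiles_def D7_def by auto

lemma W_mono: "A \<subseteq> B \<Longrightarrow> W A \<subseteq> W B"
  unfolding W_def by auto

lemma W_Int: "W A \<inter> W B = W (A \<inter> B)"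
  unfolding W_def by auto

lemma W_card: "finite A \<Longrightarrow> 2 * card (W A) = card A * (card A + 1)"
  using W_card_sum by blast

lemma W_sum: "finite A \<Longrightarrow> (\<Sum>t\<in>W A. pips t) = (card A + 1) * (\<Sum>A)"
  using W_card_sum by blast

lemma W_small: "finite A \<Longrightarrow> card A \<le> 3 \<Longrightarrow> card (W A) \<le> 6"
proof -
  assume "finite A" "card A \<le> 3"
  then have "card A * (card A + 1) \<le> 12"
  proof -
    have "card A = 0 \<or> card A = 1 \<or> card A = 2 \<or> card A = 3" using \<open>card A \<le> 3\<close> by arith
    then show ?thesis by auto
  qed
  then show ?thesis using W_card[OF \<open>finite A\<close>] by linarith
qed

lemma W_small2: "finite A \<Longrightarrow> card A \<le> 2 \<Longrightarrow> card (W A) \<le> 3"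
proof -
  assume "finite A" "card A \<le> 2"
  then have "card A * (card A + 1) \<le> 6"
  proof -
    have "card A = 0 \<or> card A = 1 \<or> card A = 2" using \<open>card A \<le> 2\<close> by arith
    then show ?thesis by auto
  qed
  then show ?thesis using W_card[OF \<open>finite A\<close>] by linarith
qed

lemma sum_lb:
  fixes g :: "tile \<Rightarrow> nat"
  assumes "finite D" "\<forall>t\<in>D. c \<le> pips t + g t" "sum g D \<le> m"
  shows "card D * c \<le> sum pips D + m"
proof -
  have "card D * c = (\<Sum>t\<in>D. c)" by simp
  also have "\<dots> \<le> (\<Sum>t\<in>D. pips t + g t)" using assms(2) by (intro sum_mono) auto
  also have "\<dots> = sum pips D + sum g D" by (simp add: sum.distrib)
  finally show ?thesis using assms(3) by linarith
qed

lemma sum_supp: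
  fixes g :: "tile \<Rightarrow> nat"
  assumes "finite D" "finite K" "\<forall>t. t \<notin> K \<longrightarrow> g t = 0"
  shows "sum g D \<le> sum g K"
proof -
  have z: "\<forall>i\<in>D - D \<inter> K. g i = 0" using assms(3) by blast
  have "sum g D = sum g (D \<inter> K)"
    by (rule sum.mono_neutral_right[OF assms(1) _ z]) auto
  also have "\<dots> \<le> sum g K" by (rule sum_mono2) (use assms in auto)
  finally show ?thesis .
qed

lemma L_e0: assumes "D \<subseteq> tiles" "\<forall>t\<in>D. 0 \<notin> nums t" "card D = 3"
  shows "9 \<le> sum pips D"
proof -
  define g :: "tile \<Rightarrow> nat" where "g t = (if t = (1,1) then 2 else if t = (1,2) then 1 else 0)" for t
  have fD: "finite D" using assms(3) by (intro card_ge_0_finite) simp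
  have "\<forall>t\<in>D. 4 \<le> pips t + g t"
  proof
    fix t assume "t \<in> D"
    obtain a b where t: "t = (a,b)" by (cases t)
    have "a \<le> b" "b \<le> 6" "a \<noteq> 0" "b \<noteq> 0" using assms(1,2) \<open>t \<in> D\<close> unfolding t tiles_def nums_def by auto
    then show "4 \<le> pips t + g t" unfolding t pips_def g_def by auto
  qed
  moreover have "sum g D \<le> 3"
  proof -
    have "sum g D \<le> sum g {(1,1),(1,2)}" by (rule sum_supp) (use fD in \<open>auto simp: g_def\<close>)
    also have "\<dots> = 3" by (simp add: g_def)
    finally show ?thesis .
  qed
  ultimately have "card D * 4 \<le> sum pips D + 3" by (intro sum_lb[OF fD]) auto
  then show ?thesis using assms(3) by simp
qed

lemma L_e1: assumes "D \<subseteq> tiles" "\<forall>t\<in>D. 1 \<notin> nums t" "card D = 3"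
  shows "5 \<le> sum pips D"
proof -
  define g :: "tile \<Rightarrow> nat" where "g t = (if t = (0,0) then 3 else if t = (0,2) then 1 else 0)" for t
  have fD: "finite D" using assms(3) by (intro card_ge_0_finite) simp
  have "\<forall>t\<in>D. 3 \<le> pips t + g t"
  proof
    fix t assume "t \<in> D"
    obtain a b where t: "t = (a,b)" by (cases t)
    have "a \<le> b" "b \<le> 6" "a \<noteq> 1" "b \<noteq> 1" using assms(1,2) \<open>t \<in> D\<close> unfolding t tiles_def nums_def by auto
    then show "3 \<le> pips t + g t" unfolding t pips_def g_def by auto
  qed
  moreover have "sum g D \<le> 4"
  proof -
    have "sum g D \<le> sum g {(0,0),(0,2)}" by (rule sum_supp) (use fD in \<open>auto simp: g_def\<close>)
    also have "\<dots> = 4" by (simp add: g_def)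
    finally show ?thesis .
  qed
  ultimately have "card D * 3 \<le> sum pips D + 4" by (intro sum_lb[OF fD]) auto
  then show ?thesis using assms(3) by simp
qed

lemma L_min: assumes "Om \<subseteq> W A" "\<forall>x\<in>A. p \<le> x" "card Om = 2"
  shows "4 * p + 1 \<le> sum pips Om"
proof -
  define g :: "tile \<Rightarrow> nat" where "g t = (if t = (p,p) then 1 else 0)" for t
  have fOm: "finite Om" using assms(3) by (intro card_ge_0_finite) simp
  have "\<forall>t\<in>Om. 2 * p + 1 \<le> pips t + g t"
  proof
    fix t assume "t \<in> Om"
    obtain a b where t: "t = (a,b)" by (cases t)
    have "a \<le> b" "p \<le> a" "p \<le> b" using assms(1,2) \<open>t \<in> Om\<close> unfolding t W_def by auto
    then show "2 * p + 1 \<le> pips t + g t" unfolding t pips_def g_def by auto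
  qed
  moreover have "sum g Om \<le> 1"
  proof -
    have "sum g Om \<le> sum g {(p,p)}" by (rule sum_supp) (use fOm in \<open>auto simp: g_def\<close>)
    also have "\<dots> = 1" by (simp add: g_def)
    finally show ?thesis .
  qed
  ultimately have "card Om * (2 * p + 1) \<le> sum pips Om + 1" by (intro sum_lb[OF fOm]) auto
  then show ?thesis using assms(3) by simp
qed

lemma L15: assumes "B \<subseteq> D7" "card B = 3" shows "\<Sum>B \<le> 15"
proof -
  obtain x y z where B: "B = {x,y,z}" "x \<noteq> y" "y \<noteq> z" "x \<noteq> z"
    using assms(2) card_3_iff by metis
  have "x \<le> 6" "y \<le> 6" "z \<le> 6" using assms(1) unfolding B D7_def by auto
  then have "x + y + z \<le> 15" using B(2-4) by arith
  then show ?thesis using B by simp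
qed

lemma sum_avoid: assumes "A \<subseteq> D7" "e \<notin> A" "e \<le> 6" shows "\<Sum>A + e \<le> 21"
proof -
  have eD: "e \<in> D7" using assms(3) unfolding D7_def by auto
  have "\<Sum>A \<le> \<Sum>(D7 - {e})" by (rule sum_mono2) (use assms finite_D7 in auto)
  also have "\<dots> = 21 - e" using sum_diff1_nat[of "\<lambda>x. x" D7 e] eD sum_D7 by simp
  finally show ?thesis using assms(3) by arith
qed

lemma card_avoid: assumes "A \<subseteq> D7" "e \<notin> A" "e \<le> 6" shows "card A \<le> 6"
proof -
  have eD: "e \<in> D7" using assms(3) unfolding D7_def by auto
  have "card A \<le> card (D7 - {e})" by (rule card_mono) (use assms finite_D7 in auto)
  also have "\<dots> = 6" using eD card_D7 finite_D7 by simp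
  finally show ?thesis .
qed

lemma W_avoid: "e \<notin> A \<Longrightarrow> t \<in> W A \<Longrightarrow> e \<notin> nums t"
  unfolding W_def nums_def by auto

lemma core1:
  assumes e6: "e \<le> 6" and sub: "Ss \<subseteq> tiles" "Sb \<subseteq> tiles" and dj: "Ss \<inter> Sb = {}"
    and ea: "e \<notin> Av Ss" "e \<notin> Av Sb" and X: "Av Ss \<inter> Av Sb = {u}"
    and ca: "card (Av Ss) = 3" "card (Av Sb) = 4" and cs: "card Ss = 6" "card Sb = 7"
  shows "sum pips Ss + sum pips Sb \<le> 107"
proof -
  define As where "As = Av Ss"
  define Ab where "Ab = Av Sb"
  have AsD: "As \<subseteq> D7" "Ab \<subseteq> D7" using Av_D7 sub unfolding As_def Ab_def by auto
  have fA: "finite As" "finite Ab" using AsD finite_D7 finite_subset by auto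
  have cWs: "card (W As) = 6" using W_card[OF fA(1)] ca unfolding As_def by simp
  have cWb: "card (W Ab) = 10" using W_card[OF fA(2)] ca unfolding Ab_def by simp
  have sWs: "sum pips (W As) = 4 * \<Sum>As" using W_sum[OF fA(1)] ca unfolding As_def by simp
  have sWb: "sum pips (W Ab) = 5 * \<Sum>Ab" using W_sum[OF fA(2)] ca unfolding Ab_def by simp
  have fWs: "finite (W As)" "finite (W Ab)" using W_finite fA by auto
  have Ss_eq: "Ss = W As"
    using card_subset_eq[OF fWs(1) S_W[OF sub(1), folded As_def]] cWs cs by simp
  have uA: "u \<in> As" "u \<in> Ab" using X unfolding As_def Ab_def by auto
  have uu: "(u,u) \<in> W As" "(u,u) \<in> W Ab" using uA unfolding W_def by auto
  then have uuS: "(u,u) \<notin> Sb" using dj Ss_eq by auto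
  define U2 where "U2 = W Ab - {(u,u)}"
  have SbU: "Sb \<subseteq> U2" using S_W[OF sub(2)] uuS unfolding U2_def Ab_def by auto
  have fU: "finite U2" using fWs unfolding U2_def by auto
  have cU: "card U2 = 9" using cWb uu unfolding U2_def by (simp add: card_Diff_singleton fWs)
  have sU: "sum pips U2 + 2 * u = 5 * \<Sum>Ab"
  proof -
    have "sum pips (W Ab) = pips (u,u) + sum pips U2"
      unfolding U2_def by (rule sum.remove[OF fWs(2) uu(2)])
    then show ?thesis using sWb by (simp add: pips_def)
  qed
  define Om where "Om = U2 - Sb"
  have cOm: "card Om = 2" unfolding Om_def using card_Diff_subset[OF finite_subset[OF SbU fU] SbU] cU cs by simp
  have sOm: "sum pips U2 = sum pips Sb + sum pips Om"
    unfolding Om_def using sum.subset_diff[OF SbU fU, of pips] by simp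
  have OmW: "Om \<subseteq> W Ab" unfolding Om_def U2_def by auto
  define p where "p = Min Ab"
  have Abne: "Ab \<noteq> {}" using uA by auto
  have pA: "p \<in> Ab" "\<forall>x\<in>Ab. p \<le> x" unfolding p_def using fA(2) Abne by auto
  have Om_lb: "4 * p + 1 \<le> sum pips Om" by (rule L_min[OF OmW pA(2) cOm])
  have "\<Sum>(Ab - {p}) \<le> 15"
    by (rule L15) (use AsD pA ca fA in \<open>auto simp: Ab_def\<close>)
  then have Ab_ub: "\<Sum>Ab \<le> p + 15" using sum.remove[OF fA(2) pA(1), of "\<lambda>x. x"] by simp
  have un: "\<Sum>(As \<union> Ab) + \<Sum>(As \<inter> Ab) = \<Sum>As + \<Sum>Ab"
    by (rule sum.union_inter[OF fA])
  have XI: "As \<inter> Ab = {u}" using X unfolding As_def Ab_def .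
  have un2: "\<Sum>(As \<union> Ab) + e \<le> 21"
    by (rule sum_avoid) (use AsD ea e6 in \<open>auto simp: As_def Ab_def\<close>)
  have u6: "u \<le> 6" using uA AsD unfolding D7_def by auto
  have p1: "e = 0 \<Longrightarrow> 1 \<le> p" using pA ea unfolding Ab_def by (cases p) auto
  have main: "sum pips Ss + sum pips Sb + sum pips Om + 2 * u = 4 * \<Sum>As + 5 * \<Sum>Ab"
    using Ss_eq sWs sU sOm by simp
  show ?thesis
  proof (cases "e = 0")
    case True
    then show ?thesis using main Om_lb Ab_ub un XI un2 u6 p1 by simp
  next
    case False
    then show ?thesis using main Om_lb Ab_ub un XI un2 u6 by simp
  qed
qed

lemma core2:
  assumes e6: "e \<le> 6" and sub: "S1 \<subseteq> tiles" "S2 \<subseteq> tiles" and dj: "S1 \<inter> S2 = {}"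
    and ea: "e \<notin> Av S1" "e \<notin> Av S2" and X: "Av S1 \<inter> Av S2 = {u,v}" and uv: "u < v"
    and nt: "(u,v) \<notin> S1" "(u,v) \<notin> S2"
    and cs: "card S1 + card S2 = 13" "6 \<le> card S1" "6 \<le> card S2"
  shows "sum pips S1 + sum pips S2 \<le> 107"
proof -
  define A1 where "A1 = Av S1"
  define A2 where "A2 = Av S2"
  have AD: "A1 \<subseteq> D7" "A2 \<subseteq> D7" using Av_D7 sub unfolding A1_def A2_def by auto
  have fA: "finite A1" "finite A2" using AD finite_D7 finite_subset by auto
  have fW: "finite (W A1)" "finite (W A2)" using W_finite fA by auto
  have uvA: "u \<in> A1" "v \<in> A1" "u \<in> A2" "v \<in> A2" using X unfolding A1_def A2_def by auto
  have uvW: "(u,v) \<in> W A1" "(u,v) \<in> W A2" using uvA uv unfolding W_def by auto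
  have SW1: "S1 \<subseteq> W A1 - {(u,v)}" using S_W[OF sub(1)] nt unfolding A1_def by auto
  have SW2: "S2 \<subseteq> W A2 - {(u,v)}" using S_W[OF sub(2)] nt unfolding A2_def by auto
  have a1: "4 \<le> card A1"
  proof (rule ccontr)
    assume "\<not> 4 \<le> card A1"
    then have "card (W A1) \<le> 6" using W_small fA by auto
    moreover have "card S1 \<le> card (W A1 - {(u,v)})" using card_mono SW1 fW by blast
    ultimately show False using cs uvW by (simp add: card_Diff_singleton fW)
  qed
  have a2: "4 \<le> card A2"
  proof (rule ccontr)
    assume "\<not> 4 \<le> card A2"
    then have "card (W A2) \<le> 6" using W_small fA by auto
    moreover have "card S2 \<le> card (W A2 - {(u,v)})" using card_mono SW2 fW by blast
    ultimately show False using cs uvW by (simp add: card_Diff_singleton fW)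
  qed
  have XI: "A1 \<inter> A2 = {u,v}" using X unfolding A1_def A2_def .
  have cX: "card (A1 \<inter> A2) = 2" using XI uv by simp
  have cU6: "card (A1 \<union> A2) \<le> 6"
    by (rule card_avoid) (use AD ea e6 in \<open>auto simp: A1_def A2_def\<close>)
  have "card (A1 \<union> A2) + card (A1 \<inter> A2) = card A1 + card A2" using card_Un_Int[OF fA] by simp
  then have ca: "card A1 = 4" "card A2 = 4" using a1 a2 cX cU6 by auto
  have cW: "card (W A1) = 10" "card (W A2) = 10" using W_card[OF fA(1)] W_card[OF fA(2)] ca by simp_all
  have sW: "sum pips (W A1) = 5 * \<Sum>A1" "sum pips (W A2) = 5 * \<Sum>A2"
    using W_sum[OF fA(1)] W_sum[OF fA(2)] ca by simp_all
  have fX: "finite {u,v}" by simp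
  have WI: "W A1 \<inter> W A2 = W {u,v}" using W_Int XI by simp
  have cWX: "card (W {u,v}) = 3" using W_card[OF fX] uv by simp
  have sWX: "sum pips (W {u,v}) = 3 * (u + v)" using W_sum[OF fX] uv by simp
  define V where "V = W A1 \<union> W A2"
  have fV: "finite V" using fW unfolding V_def by simp
  have cV: "card V = 17" using card_Un_Int[OF fW] cW WI cWX unfolding V_def by simp
  have sV: "sum pips V + 3 * (u + v) = 5 * \<Sum>A1 + 5 * \<Sum>A2"
    using sum.union_inter[OF fW, of pips] sW WI sWX unfolding V_def by simp
  have uvV: "(u,v) \<in> V" using uvW unfolding V_def by simp
  define U where "U = V - {(u,v)}"
  have fU: "finite U" using fV unfolding U_def by simp
  have cU: "card U = 16" using cV uvV fV unfolding U_def by (simp add: card_Diff_singleton)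
  have sU: "sum pips V = (u + v) + sum pips U"
    using sum.remove[OF fV uvV, of pips] unfolding U_def by (simp add: pips_def)
  define S where "S = S1 \<union> S2"
  have SU: "S \<subseteq> U" using SW1 SW2 unfolding S_def U_def V_def by auto
  have fS: "finite S1" "finite S2" using SU fU unfolding S_def by (auto intro: finite_subset)
  have cS: "card S = 13" using card_Un_disjoint[OF fS dj] cs unfolding S_def by simp
  have sS: "sum pips S = sum pips S1 + sum pips S2" using sum.union_disjoint[OF fS dj] unfolding S_def by simp
  define Om where "Om = U - S"
  have cOm: "card Om = 3" unfolding Om_def using card_Diff_subset[OF finite_subset[OF SU fU] SU] cU cS by simp
  have sOm: "sum pips U = sum pips S + sum pips Om"
    unfolding Om_def using sum.subset_diff[OF SU fU, of pips] by simp
  have OmT: "Om \<subseteq> tiles" using W_tiles AD unfolding Om_def U_def V_def by blast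
  have OmE: "\<forall>t\<in>Om. e \<notin> nums t"
    using W_avoid ea unfolding Om_def U_def V_def A1_def A2_def by blast
  have un: "\<Sum>(A1 \<union> A2) + \<Sum>(A1 \<inter> A2) = \<Sum>A1 + \<Sum>A2"
    by (rule sum.union_inter[OF fA])
  have sX: "\<Sum>(A1 \<inter> A2) = u + v" using XI uv by simp
  have un2: "\<Sum>(A1 \<union> A2) + e \<le> 21"
    by (rule sum_avoid) (use AD ea e6 in \<open>auto simp: A1_def A2_def\<close>)
  have v6: "v \<le> 6" using uvA AD unfolding D7_def by auto
  have main: "sum pips S1 + sum pips S2 + sum pips Om + 4 * (u + v) = 5 * \<Sum>A1 + 5 * \<Sum>A2"
    using sV sU sOm sS by simp
  consider "e = 0" | "e = 1" | "2 \<le> e" by arith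
  then show ?thesis
  proof cases
    case 1
    then have "9 \<le> sum pips Om" using L_e0 OmT OmE cOm by blast
    then show ?thesis using main un sX un2 v6 uv 1 by simp
  next
    case 2
    then have "5 \<le> sum pips Om" using L_e1 OmT OmE cOm by blast
    then show ?thesis using main un sX un2 v6 uv 2 by simp
  next
    case 3
    then show ?thesis using main un sX un2 v6 uv by simp
  qed
qed

lemma CL:
  assumes e6: "e \<le> 6" and sub: "S1 \<subseteq> tiles" "S2 \<subseteq> tiles" and dj: "S1 \<inter> S2 = {}"
    and ea: "e \<notin> Av S1" "e \<notin> Av S2"
    and c7: "card S1 \<le> 7" "card S2 \<le> 7" and c13: "13 \<le> card S1 + card S2"
    and c14: "card S1 + card S2 = 14 \<longrightarrow> Av S1 \<inter> Av S2 = {}"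
    and t0: "t0 \<in> tiles" "t0 \<notin> S1" "t0 \<notin> S2" "Av S1 \<inter> Av S2 \<subseteq> nums t0"
  shows "sum pips S1 + sum pips S2 \<le> 107"
proof -
  define A1 where "A1 = Av S1"
  define A2 where "A2 = Av S2"
  have AD: "A1 \<subseteq> D7" "A2 \<subseteq> D7" using Av_D7 sub unfolding A1_def A2_def by auto
  have fA: "finite A1" "finite A2" using AD finite_D7 finite_subset by auto
  have fW: "finite (W A1)" "finite (W A2)" using W_finite fA by auto
  have SW: "S1 \<subseteq> W A1" "S2 \<subseteq> W A2" using S_W sub unfolding A1_def A2_def by auto
  have cSW: "card S1 \<le> card (W A1)" "card S2 \<le> card (W A2)" using card_mono fW SW by auto
  have cX2: "card (A1 \<inter> A2) \<le> 2"
  proof -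
    have "card (A1 \<inter> A2) \<le> card (nums t0)" using t0(4) unfolding A1_def A2_def
      by (intro card_mono) (auto simp: nums_def)
    also have "\<dots> \<le> 2" unfolding nums_def by (simp add: card_insert_le_m1)
    finally show ?thesis .
  qed
  have s6: "6 \<le> card S1" "6 \<le> card S2" using c7 c13 by auto
  have a3: "3 \<le> card A1" "3 \<le> card A2"
  proof -
    show "3 \<le> card A1"
    proof (rule ccontr)
      assume "\<not> 3 \<le> card A1"
      then have "card (W A1) \<le> 3" using W_small2[OF fA(1)] by simp
      then show False using cSW(1) s6(1) by linarith
    qed
    show "3 \<le> card A2"
    proof (rule ccontr)
      assume "\<not> 3 \<le> card A2"
      then have "card (W A2) \<le> 3" using W_small2[OF fA(2)] by simp
      then show False using cSW(2) s6(2) by linarith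
    qed
  qed
  have a4: "card S1 = 7 \<Longrightarrow> 4 \<le> card A1" "card S2 = 7 \<Longrightarrow> 4 \<le> card A2"
  proof -
    assume h: "card S1 = 7"
    show "4 \<le> card A1"
    proof (rule ccontr)
      assume "\<not> 4 \<le> card A1"
      then have "card (W A1) \<le> 6" using W_small[OF fA(1)] by simp
      then show False using cSW(1) h by linarith
    qed
  next
    assume h: "card S2 = 7"
    show "4 \<le> card A2"
    proof (rule ccontr)
      assume "\<not> 4 \<le> card A2"
      then have "card (W A2) \<le> 6" using W_small[OF fA(2)] by simp
      then show False using cSW(2) h by linarith
    qed
  qed
  have cU6: "card (A1 \<union> A2) \<le> 6"
    by (rule card_avoid) (use AD ea e6 in \<open>auto simp: A1_def A2_def\<close>)
  have cUI: "card (A1 \<union> A2) + card (A1 \<inter> A2) = card A1 + card A2" using card_Un_Int[OF fA] by simp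
  have dj': "S2 \<inter> S1 = {}" using dj by blast
  consider "card (A1 \<inter> A2) = 0" | "card (A1 \<inter> A2) = 1" | "card (A1 \<inter> A2) = 2" using cX2 by arith
  then show ?thesis
  proof cases
    case 1
    have "card S1 = 7 \<or> card S2 = 7" using c7 c13 by arith
    then have "7 \<le> card A1 + card A2"
    proof
      assume "card S1 = 7" then show ?thesis using a4(1) a3(2) by linarith
    next
      assume "card S2 = 7" then show ?thesis using a4(2) a3(1) by linarith
    qed
    then show ?thesis using cU6 cUI 1 by linarith
  next
    case 2
    then have X0: "A1 \<inter> A2 \<noteq> {}" by (metis card.empty zero_neq_one)
    then have "card S1 + card S2 \<noteq> 14" using c14 unfolding A1_def A2_def by blast
    then have c13': "card S1 + card S2 = 13" using c7 c13 by arith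
    obtain u where u: "A1 \<inter> A2 = {u}" using card_1_singleton_iff[THEN iffD1, OF 2[unfolded One_nat_def]] by blast
    have u1: "Av S1 \<inter> Av S2 = {u}" using u unfolding A1_def A2_def .
    have u2: "Av S2 \<inter> Av S1 = {u}" using u1 by blast
    show ?thesis
    proof (cases "card S1 = 7")
      case True
      have ca: "card A1 = 4" "card A2 = 3" using a3 a4(1)[OF True] cU6 cUI 2 by linarith+
      have "card S2 = 6" using True c13' by linarith
      have "sum pips S2 + sum pips S1 \<le> 107"
        by (rule core1[OF e6 sub(2) sub(1) dj' ea(2) ea(1) u2]) (use ca \<open>card S2 = 6\<close> True in \<open>simp_all add: A1_def A2_def\<close>)
      then show ?thesis by simp
    next
      case False
      have cs: "card S1 = 6" "card S2 = 7" using False c7 c13' by linarith+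
      have ca: "card A1 = 3" "card A2 = 4" using a3 a4(2)[OF cs(2)] cU6 cUI 2 by linarith+
      show ?thesis
        by (rule core1[OF e6 sub(1) sub(2) dj ea(1) ea(2) u1]) (use ca cs in \<open>simp_all add: A1_def A2_def\<close>)
    qed
  next
    case 3
    then have X0: "A1 \<inter> A2 \<noteq> {}" by (metis card.empty zero_neq_numeral)
    then have "card S1 + card S2 \<noteq> 14" using c14 unfolding A1_def A2_def by blast
    then have c13': "card S1 + card S2 = 13" using c7 c13 by arith
    obtain x y where xy: "A1 \<inter> A2 = {x,y}" "x \<noteq> y" using card_2_iff[THEN iffD1, OF 3] by blast
    define u where "u = min x y"
    define v where "v = max x y"
    have uv: "u < v" "A1 \<inter> A2 = {u,v}" using xy unfolding u_def v_def by (auto simp: min_def max_def)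
    have t0uv: "t0 = (u,v)"
    proof -
      have "{u,v} \<subseteq> {fst t0, snd t0}" using t0(4) uv unfolding A1_def A2_def nums_def by auto
      moreover have "fst t0 \<le> snd t0" using tiles_D7 t0(1) by auto
      ultimately show ?thesis using uv(1) by (cases t0) auto
    qed
    have uv1: "Av S1 \<inter> Av S2 = {u,v}" using uv(2) unfolding A1_def A2_def .
    show ?thesis
      by (rule core2[OF e6 sub dj ea uv1 uv(1)]) (use t0 t0uv c13' s6 in simp_all)
  qed
qed




definition ends :: "state \<Rightarrow> nat set" where
  "ends s = (case snd s of None \<Rightarrow> {} | Some (l,r) \<Rightarrow> {l,r})"

lemma ends_Some: "snd s = Some (l,r) \<Longrightarrow> ends s = {l,r}"
  unfolding ends_def by simp

lemma ends_None: "snd s = None \<Longrightarrow> ends s = {}"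
  unfolding ends_def by simp

lemma nums_other: "has_num l x \<Longrightarrow> nums x = {l, other_num l x}"
  unfolding has_num_def nums_def other_num_def by auto

lemma step_other: "step p s s' \<Longrightarrow> q \<noteq> p \<Longrightarrow> fst s' q = fst s q"
  unfolding step_def by (auto split: option.splits)

lemma step_sub: "step p s s' \<Longrightarrow> fst s' p \<subseteq> fst s p"
  unfolding step_def by (auto split: option.splits)

lemma step_some: "step p s s' \<Longrightarrow> snd s' \<noteq> None"
  unfolding step_def by (auto split: option.splits)

lemma step_pass: "step p s s' \<Longrightarrow> fst s' p = fst s p \<Longrightarrow>
   s' = s \<and> snd s \<noteq> None \<and> (\<forall>y\<in>fst s p. \<forall>v\<in>ends s. v \<notin> nums y)"
  unfolding step_def ends_def nums_def has_num_def
  by (auto split: option.splits)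

lemma step_play: "step p s s' \<Longrightarrow> y \<in> fst s p \<Longrightarrow> y \<notin> fst s' p \<Longrightarrow>
   fst s' = (fst s)(p := fst s p - {y}) \<and>
   (snd s = None \<longrightarrow> ends s' = nums y) \<and>
   (snd s \<noteq> None \<longrightarrow> (\<exists>a b w. ends s = {a,b} \<and> nums y = {a,w} \<and> ends s' = {w,b}))"
proof -
  assume st: "step p s s'" and y: "y \<in> fst s p" "y \<notin> fst s' p"
  show ?thesis
  proof (cases "snd s")
    case None
    then obtain x where x: "x \<in> fst s p" "fst s' = (fst s)(p := fst s p - {x})" "snd s' = Some (fst x, snd x)"
      using st unfolding step_def by (simp only: option.case) blast
    have "y = x" using y x(1,2) by auto
    then show ?thesis using x None unfolding ends_def nums_def by (cases x) simp
  next
    case (Some lr)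
    obtain l r where lr: "snd s = Some (l,r)" using Some by (cases lr) auto
    have "(\<exists>x\<in>fst s p. has_num l x \<and> fst s' = (fst s)(p := fst s p - {x}) \<and> snd s' = Some (other_num l x, r))
      \<or> (\<exists>x\<in>fst s p. has_num r x \<and> fst s' = (fst s)(p := fst s p - {x}) \<and> snd s' = Some (l, other_num r x))
      \<or> s' = s" using st lr unfolding step_def by (simp only: option.case prod.case) blast
    then show ?thesis
    proof (elim disjE bexE conjE)
      fix x assume x: "x \<in> fst s p" "has_num l x" "fst s' = (fst s)(p := fst s p - {x})" "snd s' = Some (other_num l x, r)"
      have yx: "y = x" using y x(1,3) by auto
      have "ends s = {l,r} \<and> nums y = {l, other_num l x} \<and> ends s' = {other_num l x, r}"
        using ends_Some[OF lr] ends_Some[OF x(4)] nums_other[OF x(2)] yx by simp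
      then have "\<exists>a b w. ends s = {a,b} \<and> nums y = {a,w} \<and> ends s' = {w,b}" by blast
      then show ?thesis using x(3) yx lr by simp
    next
      fix x assume x: "x \<in> fst s p" "has_num r x" "fst s' = (fst s)(p := fst s p - {x})" "snd s' = Some (l, other_num r x)"
      have yx: "y = x" using y x(1,3) by auto
      have "ends s = {r,l} \<and> nums y = {r, other_num r x} \<and> ends s' = {other_num r x, l}"
        using ends_Some[OF lr] ends_Some[OF x(4)] nums_other[OF x(2)] yx by (simp add: insert_commute)
      then have "\<exists>a b w. ends s = {a,b} \<and> nums y = {a,w} \<and> ends s' = {w,b}" by blast
      then show ?thesis using x(3) yx lr by simp
    next
      assume "s' = s" then show ?thesis using y by simp
    qed
  qed
qed


lemma step_keep: "step p s s' \<Longrightarrow> snd s \<noteq> None \<Longrightarrow> ends s \<inter> ends s' \<noteq> {}"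
  unfolding step_def ends_def by (auto split: option.splits)

lemma step_changed: "step p s s' \<Longrightarrow> fst s' p \<noteq> fst s p \<Longrightarrow> \<exists>y. y \<in> fst s p \<and> y \<notin> fst s' p"
  using step_sub by blast

lemma step_first: "step p s s' \<Longrightarrow> snd s = None \<Longrightarrow> fst s' p \<noteq> fst s p"
  using step_pass by blast

locale game =
  fixes ss :: "state list"
  assumes G: "tranca_game ss"
begin

definition N :: nat where "N = length ss - 1"

abbreviation H :: "nat \<Rightarrow> nat \<Rightarrow> tile set" where "H k \<equiv> fst (ss ! k)"

lemma ne: "ss \<noteq> []" using G unfolding tranca_game_def by simp

lemma len: "length ss = Suc N" using ne unfolding N_def by (cases ss) auto

lemma stepk: "k < N \<Longrightarrow> step (k mod 4) (ss ! k) (ss ! Suc k)"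
  using G unfolding tranca_game_def N_def by simp

lemma hne: "k \<le> N \<Longrightarrow> p < 4 \<Longrightarrow> H k p \<noteq> {}"
  using G len unfolding tranca_game_def by simp

lemma deal: "is_deal (H 0)"
  using G ne unfolding tranca_game_def by (simp add: hd_conv_nth)

lemma E0: "snd (ss ! 0) = None"
  using G ne unfolding tranca_game_def by (simp add: hd_conv_nth)

lemma blk: "blocked (ss ! N)"
  using G ne unfolding tranca_game_def N_def by (simp add: last_conv_nth)

lemma mono1: "k < N \<Longrightarrow> H (Suc k) q \<subseteq> H k q"
  using stepk step_sub step_other by (metis order_refl)

lemma mono: "k \<le> m \<Longrightarrow> m \<le> N \<Longrightarrow> H m q \<subseteq> H k q"
proof (induction m)
  case 0
  then show ?case by simp
next
  case (Suc m)
  show ?case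
  proof (cases "k = Suc m")
    case True then show ?thesis by simp
  next
    case False
    then have "k \<le> m" using Suc by simp
    then have "H m q \<subseteq> H k q" using Suc by simp
    moreover have "H (Suc m) q \<subseteq> H m q" using mono1 Suc by simp
    ultimately show ?thesis by blast
  qed
qed

lemma H0: "q < 4 \<Longrightarrow> H 0 q \<subseteq> tiles \<and> card (H 0 q) = 7"
  using deal unfolding is_deal_def by blast

lemma fin0: "q < 4 \<Longrightarrow> finite (H 0 q)"
  using H0 by (metis card.infinite zero_neq_numeral)

lemma disj0: "q < 4 \<Longrightarrow> q' < 4 \<Longrightarrow> q \<noteq> q' \<Longrightarrow> H 0 q \<inter> H 0 q' = {}"
  using deal unfolding is_deal_def by blast

lemma union0: "t \<in> tiles \<Longrightarrow> \<exists>q<4. t \<in> H 0 q"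
  using deal unfolding is_deal_def by blast

lemma Htiles: "k \<le> N \<Longrightarrow> q < 4 \<Longrightarrow> H k q \<subseteq> tiles"
  using mono[of 0 k q] H0 by blast

lemma finH: "k \<le> N \<Longrightarrow> q < 4 \<Longrightarrow> finite (H k q)"
  using mono[of 0 k q] fin0 finite_subset by blast

lemma Some_after: "1 \<le> k \<Longrightarrow> k \<le> N \<Longrightarrow> snd (ss ! k) \<noteq> None"
proof -
  assume "1 \<le> k" "k \<le> N"
  then obtain k' where "k = Suc k'" "k' < N" by (cases k) auto
  then show ?thesis using stepk step_some by blast
qed

lemma ends0: "ends (ss ! 0) = {}" using E0 ends_None by blast

definition play :: "nat \<Rightarrow> bool" where
  "play k = (k < N \<and> H (Suc k) (k mod 4) \<noteq> H k (k mod 4))"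

lemma pass: "k < N \<Longrightarrow> \<not> play k \<Longrightarrow>
   ss ! Suc k = ss ! k \<and> snd (ss ! k) \<noteq> None \<and> (\<forall>y\<in>H k (k mod 4). \<forall>v\<in>ends (ss ! k). v \<notin> nums y)"
proof -
  assume a: "k < N" "\<not> play k"
  have "fst (ss ! Suc k) (k mod 4) = fst (ss ! k) (k mod 4)" using a unfolding play_def by simp
  from step_pass[OF stepk[OF a(1)] this] show ?thesis .
qed

lemma play_tile: "play k \<Longrightarrow> \<exists>y. y \<in> H k (k mod 4) \<and> y \<notin> H (Suc k) (k mod 4) \<and>
   (snd (ss ! k) = None \<longrightarrow> ends (ss ! Suc k) = nums y) \<and>
   (snd (ss ! k) \<noteq> None \<longrightarrow> (\<exists>a b w. ends (ss ! k) = {a,b} \<and> nums y = {a,w} \<and> ends (ss ! Suc k) = {w,b}))"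
proof -
  assume "play k"
  then have k: "k < N" "H (Suc k) (k mod 4) \<noteq> H k (k mod 4)" unfolding play_def by auto
  then obtain y where y: "y \<in> H k (k mod 4)" "y \<notin> H (Suc k) (k mod 4)"
    using step_changed stepk by blast
  have sp: "(snd (ss ! k) = None \<longrightarrow> ends (ss ! Suc k) = nums y) \<and>
   (snd (ss ! k) \<noteq> None \<longrightarrow> (\<exists>a b w. ends (ss ! k) = {a,b} \<and> nums y = {a,w} \<and> ends (ss ! Suc k) = {w,b}))"
    using step_play[OF stepk[OF k(1)] y] by (rule conjunct2)
  show ?thesis by (rule exI[of _ y]) (use y sp in simp)
qed

lemma play_tileE:
  assumes "play k"
  obtains y where "y \<in> H k (k mod 4)" "y \<notin> H (Suc k) (k mod 4)"
    "snd (ss ! k) = None \<longrightarrow> ends (ss ! Suc k) = nums y"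
    "snd (ss ! k) \<noteq> None \<longrightarrow> (\<exists>a b w. ends (ss ! k) = {a,b} \<and> nums y = {a,w} \<and> ends (ss ! Suc k) = {w,b})"
proof -
  from play_tile[OF assms] obtain y where "y \<in> H k (k mod 4) \<and> y \<notin> H (Suc k) (k mod 4) \<and>
    (snd (ss ! k) = None \<longrightarrow> ends (ss ! Suc k) = nums y) \<and>
    (snd (ss ! k) \<noteq> None \<longrightarrow> (\<exists>a b w. ends (ss ! k) = {a,b} \<and> nums y = {a,w} \<and> ends (ss ! Suc k) = {w,b}))"
    by (rule exE)
  then show ?thesis using that by (elim conjE) assumption
qed

lemma psub: "play k \<Longrightarrow> H (Suc k) (k mod 4) \<subset> H k (k mod 4)"
  using mono1 unfolding play_def by auto

lemma mod4: "k mod 4 < (4::nat)" by simp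

lemma play_card: "play k \<Longrightarrow> card (H (Suc k) (k mod 4)) < card (H k (k mod 4))"
proof -
  assume p: "play k"
  then have "k \<le> N" unfolding play_def by simp
  then have "finite (H k (k mod 4))" using finH by simp
  then show ?thesis using psubset_card_mono psub[OF p] by blast
qed

lemma card_le7: "k \<le> N \<Longrightarrow> q < 4 \<Longrightarrow> card (H k q) \<le> 7"
proof -
  assume a: "k \<le> N" "q < 4"
  have "card (H k q) \<le> card (H 0 q)" using mono[of 0 k q] a fin0 card_mono by auto
  then show ?thesis using H0 a by simp
qed

lemma play_le6: "play k \<Longrightarrow> card (H N (k mod 4)) \<le> 6"
proof -
  assume p: "play k"
  then have k: "Suc k \<le> N" unfolding play_def by simp
  have "card (H N (k mod 4)) \<le> card (H (Suc k) (k mod 4))"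
    using mono[OF k order_refl] finH[OF k mod4] card_mono by blast
  moreover have "card (H k (k mod 4)) \<le> 7" using card_le7 k by simp
  ultimately show ?thesis using play_card[OF p] by linarith
qed

lemma two_plays: "play k1 \<Longrightarrow> play k2 \<Longrightarrow> k1 < k2 \<Longrightarrow> k1 mod 4 = k2 mod 4 \<Longrightarrow>
   card (H N (k1 mod 4)) \<le> 5"
proof -
  assume p1: "play k1" and p2: "play k2" and lt: "k1 < k2" and eq: "k1 mod 4 = k2 mod 4"
  define q where "q = k1 mod 4"
  have q4: "q < 4" unfolding q_def by simp
  have k2: "Suc k2 \<le> N" using p2 unfolding play_def by simp
  have a: "card (H N q) \<le> card (H (Suc k2) q)"
    using mono[OF k2 order_refl] finH[OF k2 q4] card_mono by blast
  have b: "card (H (Suc k2) q) < card (H k2 q)" using play_card[OF p2] eq unfolding q_def by simp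
  have c: "card (H k2 q) \<le> card (H (Suc k1) q)"
  proof -
    have "Suc k1 \<le> k2" "k2 \<le> N" "Suc k1 \<le> N" using lt k2 by auto
    then show ?thesis using mono[of "Suc k1" k2 q] finH[of "Suc k1" q] q4 card_mono by blast
  qed
  have d: "card (H (Suc k1) q) < card (H k1 q)" using play_card[OF p1] unfolding q_def by simp
  have e: "card (H k1 q) \<le> 7" using card_le7 lt k2 q4 by simp
  show ?thesis using a b c d e unfolding q_def by linarith
qed

lemma removed: "t \<in> H 0 q \<Longrightarrow> m \<le> N \<Longrightarrow> t \<notin> H m q \<Longrightarrow> \<exists>k<m. t \<in> H k q \<and> t \<notin> H (Suc k) q"
proof (induction m)
  case 0 then show ?case by simp
next
  case (Suc m)
  show ?case
  proof (cases "t \<in> H m q")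
    case True then show ?thesis using Suc by auto
  next
    case False then show ?thesis using Suc by (metis Suc_leD less_SucI)
  qed
qed

lemma removed_play: "q < 4 \<Longrightarrow> k < N \<Longrightarrow> t \<in> H k q \<Longrightarrow> t \<notin> H (Suc k) q \<Longrightarrow> k mod 4 = q \<and> play k"
proof -
  assume a: "q < 4" "k < N" "t \<in> H k q" "t \<notin> H (Suc k) q"
  have "k mod 4 = q"
  proof (rule ccontr)
    assume "k mod 4 \<noteq> q"
    then have "H (Suc k) q = H k q" using step_other[OF stepk[OF a(2)], of q] by simp
    then show False using a by simp
  qed
  then show ?thesis using a unfolding play_def by auto
qed

lemma gone: "k < N \<Longrightarrow> q < 4 \<Longrightarrow> y \<in> H k q \<Longrightarrow> y \<notin> H (Suc k) q \<Longrightarrow> p < 4 \<Longrightarrow> y \<notin> H N p"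
proof -
  assume a: "k < N" "q < 4" "y \<in> H k q" "y \<notin> H (Suc k) q" "p < 4"
  show ?thesis
  proof (cases "p = q")
    case True
    have "H N q \<subseteq> H (Suc k) q" using mono[of "Suc k" N q] a(1) by simp
    then show ?thesis using a(4) True by blast
  next
    case False
    have "y \<in> H 0 q" using mono[of 0 k q] a by auto
    then have "y \<notin> H 0 p" using disj0[OF a(2) a(5)] False by auto
    moreover have "H N p \<subseteq> H 0 p" using mono[of 0 N p] by simp
    ultimately show ?thesis by blast
  qed
qed

lemma le6: "k \<le> N \<Longrightarrow> \<forall>v\<in>ends (ss ! k). v \<le> 6"
proof (induction k)
  case 0 then show ?case using ends0 by simp
next
  case (Suc k)
  then have k: "k < N" by simp
  show ?case
  proof (cases "play k")
    case False
    have "ss ! Suc k = ss ! k" using pass[OF k False] by simp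
    then show ?thesis using Suc.IH k by simp
  next
    case True
    obtain y where y: "y \<in> H k (k mod 4)"
      "snd (ss ! k) = None \<longrightarrow> ends (ss ! Suc k) = nums y"
      "snd (ss ! k) \<noteq> None \<longrightarrow> (\<exists>a b w. ends (ss ! k) = {a,b} \<and> nums y = {a,w} \<and> ends (ss ! Suc k) = {w,b})"
      by (rule play_tileE[OF True])
    have yt: "y \<in> tiles" using y(1) Htiles[of k "k mod 4"] k by auto
    then have ny: "\<forall>v\<in>nums y. v \<le> 6" unfolding nums_def tiles_def by auto
    have "ends (ss ! Suc k) \<subseteq> ends (ss ! k) \<union> nums y"
    proof (cases "snd (ss ! k) = None")
      case True then show ?thesis using y(2) by simp
    next
      case False
      then obtain a b w where "ends (ss ! k) = {a,b}" "nums y = {a,w}" "ends (ss ! Suc k) = {w,b}" using y(3) by blast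
      then show ?thesis by auto
    qed
    moreover have "\<forall>v\<in>ends (ss ! k). v \<le> 6" using Suc.IH k by simp
    ultimately show ?thesis using ny by blast
  qed
qed

end




definition tileL :: "tile list" where "tileL = concat (map (\<lambda>b. map (\<lambda>a. (a,b)) [0..<Suc b]) [0..<7])"

lemma tiles_set: "tiles = set tileL"
proof (rule set_eqI)
  fix x :: tile
  obtain a b where x: "x = (a,b)" by (cases x)
  show "x \<in> tiles \<longleftrightarrow> x \<in> set tileL"
    unfolding x tiles_def tileL_def
    apply (auto simp: image_iff)
    apply (rule_tac x=b in bexI)
    apply auto
    done
qed

lemma tileL_eval: "tileL = [(0,0),(0,1),(1,1),(0,2),(1,2),(2,2),(0,3),(1,3),(2,3),(3,3),(0,4),(1,4),(2,4),(3,4),(4,4),(0,5),(1,5),(2,5),(3,5),(4,5),(5,5),(0,6),(1,6),(2,6),(3,6),(4,6),(5,6),(6,6)]"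
  by (simp add: tileL_def upt_rec)

lemma excess22: "(\<Sum>t\<in>tiles. pips t - 7) = 22"
proof -
  have "distinct tileL" by (simp add: tileL_eval)
  then have "(\<Sum>t\<in>tiles. pips t - 7) = sum_list (map (\<lambda>t. pips t - 7) tileL)"
    unfolding tiles_set by (rule sum.distinct_set_conv_list)
  also have "\<dots> = 22" by (simp add: tileL_eval pips_def)
  finally show ?thesis .
qed

lemma finite_tiles: "finite tiles" unfolding tiles_set by simp

lemma small_bound: "S \<subseteq> tiles \<Longrightarrow> sum pips S \<le> 7 * card S + 22"
proof -
  assume S: "S \<subseteq> tiles"
  have fS: "finite S" using S finite_tiles finite_subset by blast
  have "sum pips S \<le> (\<Sum>t\<in>S. 7 + (pips t - 7))" by (rule sum_mono) simp
  also have "\<dots> = 7 * card S + (\<Sum>t\<in>S. pips t - 7)" by (simp add: sum.distrib)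
  also have "(\<Sum>t\<in>S. pips t - 7) \<le> (\<Sum>t\<in>tiles. pips t - 7)"
    by (rule sum_mono2[OF finite_tiles S]) simp
  finally show ?thesis using excess22 by linarith
qed

context game
begin

lemma final: "\<exists>l r. snd (ss ! N) = Some (l,r) \<and> (\<forall>p<4. \<forall>x\<in>H N p. l \<notin> nums x \<and> r \<notin> nums x)"
  using blk unfolding blocked_def has_num_def nums_def by fastforce

definition X :: "nat \<Rightarrow> nat set" where "X c = Av (H N c) \<inter> Av (H N (c+2))"

lemma member: "(k::nat) mod 2 = c \<Longrightarrow> c < 2 \<Longrightarrow> k mod 4 = c \<or> k mod 4 = c + 2"
  by presburger

lemma avoid_X:
  assumes c: "c < 2" and x: "x \<in> X c" and k: "k \<le> N" "k mod 2 = c"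
    and av: "\<forall>y\<in>H k (k mod 4). x \<notin> nums y"
  shows False
proof -
  have q: "k mod 4 = c \<or> k mod 4 = c + 2" using member k c by blast
  have "x \<in> Av (H N (k mod 4))" using x q unfolding X_def by auto
  then obtain t where t: "t \<in> H N (k mod 4)" "x \<in> nums t" unfolding Av_def by blast
  have "t \<in> H k (k mod 4)" using mono[OF k(1) order_refl] t(1) by blast
  then show False using av t(2) by blast
qed

lemma notN: "c < 2 \<Longrightarrow> x \<in> X c \<Longrightarrow> x \<notin> ends (ss ! N)"
proof
  assume c: "c < 2" and x: "x \<in> X c" and e: "x \<in> ends (ss ! N)"
  obtain l r where lr: "snd (ss ! N) = Some (l,r)" "\<forall>p<4. \<forall>x\<in>H N p. l \<notin> nums x \<and> r \<notin> nums x"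
    using final by blast
  have "x \<in> Av (H N c)" using x unfolding X_def by auto
  then obtain t where t: "t \<in> H N c" "x \<in> nums t" unfolding Av_def by blast
  have "x = l \<or> x = r" using e ends_Some[OF lr(1)] by auto
  moreover have "l \<notin> nums t \<and> r \<notin> nums t" proof -
    have c4: "c < 4" using c by arith
    show ?thesis using lr(2) c4 t(1) by blast
  qed
  ultimately show False using t(2) by auto
qed

lemma seen:
  assumes c: "c < 2" and x: "x \<in> X c" and m: "1 \<le> m" "m \<le> N" and e: "x \<in> ends (ss ! m)"
  shows "(m mod 2 = c \<and> play m) \<or> (m mod 2 \<noteq> c \<and> play (m - 1))"
proof -
  have mN: "m < N" using notN[OF c x] e m by (cases "m = N") auto
  show ?thesis
  proof (cases "m mod 2 = c")
    case True
    show ?thesis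
    proof (rule ccontr)
      assume "\<not> ?thesis"
      then have "\<not> play m" using True by simp
      then have "\<forall>y\<in>H m (m mod 4). \<forall>v\<in>ends (ss ! m). v \<notin> nums y" using pass[OF mN] by blast
      then have "\<forall>y\<in>H m (m mod 4). x \<notin> nums y" using e by blast
      then show False using avoid_X[OF c x _ True] mN by simp
    qed
  next
    case False
    define k where "k = m - 1"
    have k1: "Suc k = m" "k < N" using m mN unfolding k_def by auto
    have k3: "k mod 2 = c" using k1(1) False c by presburger
    note k = k1 k3
    show ?thesis
    proof (rule ccontr)
      assume "\<not> ?thesis"
      then have "\<not> play k" using False unfolding k_def by simp
      then have p: "ss ! Suc k = ss ! k" "\<forall>y\<in>H k (k mod 4). \<forall>v\<in>ends (ss ! k). v \<notin> nums y" using pass[OF k(2)] by blast+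
      have "x \<in> ends (ss ! k)" using e p(1) k(1) by simp
      then have "\<forall>y\<in>H k (k mod 4). x \<notin> nums y" using p(2) by blast
      then show False using avoid_X[OF c x _ k(3)] k(2) by simp
    qed
  qed
qed

lemma play_nums: "k < N \<Longrightarrow> y \<in> H k (k mod 4) \<Longrightarrow> y \<notin> H (Suc k) (k mod 4) \<Longrightarrow>
  nums y \<subseteq> ends (ss ! k) \<union> ends (ss ! Suc k)"
proof -
  assume a: "k < N" "y \<in> H k (k mod 4)" "y \<notin> H (Suc k) (k mod 4)"
  have sp: "(snd (ss ! k) = None \<longrightarrow> ends (ss ! Suc k) = nums y) \<and>
   (snd (ss ! k) \<noteq> None \<longrightarrow> (\<exists>a b w. ends (ss ! k) = {a,b} \<and> nums y = {a,w} \<and> ends (ss ! Suc k) = {w,b}))"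
    using step_play[OF stepk[OF a(1)] a(2,3)] by (rule conjunct2)
  show ?thesis
  proof (cases "snd (ss ! k) = None")
    case True then show ?thesis using sp by simp
  next
    case False
    then have "\<exists>a b w. ends (ss ! k) = {a,b} \<and> nums y = {a,w} \<and> ends (ss ! Suc k) = {w,b}" using sp by simp
    then obtain a b w where "ends (ss ! k) = {a,b}" "nums y = {a,w}" "ends (ss ! Suc k) = {w,b}" by blast
    then show ?thesis by auto
  qed
qed

lemma X_le6: "c < 2 \<Longrightarrow> x \<in> X c \<Longrightarrow> x \<le> 6"
proof -
  assume c: "c < 2" and x: "x \<in> X c"
  have "x \<in> Av (H N c)" using x unfolding X_def by auto
  moreover have "H N c \<subseteq> tiles" using Htiles c by simp
  then have "Av (H N c) \<subseteq> D7" by (rule Av_D7)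
  ultimately have "x \<in> D7" by blast
  then show ?thesis unfolding D7_def by auto
qed

lemma appears:
  assumes c: "c < 2" and x: "x \<in> X c"
  shows "\<exists>m. 1 \<le> m \<and> m \<le> N \<and> x \<in> ends (ss ! m)"
proof -
  obtain l r where lr: "snd (ss ! N) = Some (l,r)" "\<forall>p<4. \<forall>x\<in>H N p. l \<notin> nums x \<and> r \<notin> nums x"
    using final by blast
  have "x \<in> Av (H N c)" using x unfolding X_def by auto
  then obtain t where t: "t \<in> H N c" "x \<in> nums t" unfolding Av_def by blast
  have "l \<notin> nums t \<and> r \<notin> nums t" proof -
    have c4: "c < 4" using c by arith
    show ?thesis using lr(2) c4 t(1) by blast
  qed
  then have xl: "x \<noteq> l" using t(2) by auto
  have x6: "x \<le> 6" using X_le6[OF c x] .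
  have l6: "l \<le> 6" using le6[of N] ends_Some[OF lr(1)] by simp
  define t' where "t' = (min l x, max l x)"
  have t'T: "t' \<in> tiles" unfolding t'_def tiles_def using x6 l6 by auto
  obtain q where q: "q < 4" "t' \<in> H 0 q" using union0[OF t'T] by blast
  have "l \<in> nums t'" unfolding t'_def nums_def by (auto simp: min_def max_def)
  then have "t' \<notin> H N q" using lr(2) q(1) by blast
  then obtain k where k: "k < N" "t' \<in> H k q" "t' \<notin> H (Suc k) q" using removed[OF q(2) order_refl] by blast
  have kq: "k mod 4 = q" using removed_play[OF q(1) k] by blast
  have "nums t' \<subseteq> ends (ss ! k) \<union> ends (ss ! Suc k)" using play_nums[OF k(1)] k kq by blast
  moreover have "x \<in> nums t'" unfolding t'_def nums_def by (auto simp: min_def max_def)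
  ultimately have "x \<in> ends (ss ! k) \<or> x \<in> ends (ss ! Suc k)" by blast
  then show ?thesis
  proof
    assume h: "x \<in> ends (ss ! k)"
    have "k \<noteq> 0"
    proof
      assume "k = 0" then show False using h ends0 by simp
    qed
    then have "1 \<le> k \<and> k \<le> N \<and> x \<in> ends (ss ! k)" using h k(1) by simp
    then show ?thesis by blast
  next
    assume h: "x \<in> ends (ss ! Suc k)"
    then have "1 \<le> Suc k \<and> Suc k \<le> N \<and> x \<in> ends (ss ! Suc k)" using k(1) by simp
    then show ?thesis by blast
  qed
qed


lemma team_card: "c < 2 \<Longrightarrow> card (H N c) \<le> 7 \<and> card (H N (c+2)) \<le> 7"
  using card_le7 by simp

lemma team_one:
  assumes c: "c < 2" and c13: "13 \<le> card (H N c) + card (H N (c+2))"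
    and p1: "play k1" "k1 mod 2 = c" and p2: "play k2" "k2 mod 2 = c"
  shows "k1 = k2"
proof (rule ccontr)
  assume ne: "k1 \<noteq> k2"
  have c7: "card (H N c) \<le> 7" "card (H N (c+2)) \<le> 7" using team_card[OF c] by auto
  have q1: "k1 mod 4 = c \<or> k1 mod 4 = c + 2" using member p1(2) c by blast
  have q2: "k2 mod 4 = c \<or> k2 mod 4 = c + 2" using member p2(2) c by blast
  have l1: "card (H N (k1 mod 4)) \<le> 6" using play_le6[OF p1(1)] .
  have l2: "card (H N (k2 mod 4)) \<le> 6" using play_le6[OF p2(1)] .
  show False
  proof (cases "k1 mod 4 = k2 mod 4")
    case True
    have "card (H N (k1 mod 4)) \<le> 5"
    proof (cases "k1 < k2")
      case True then show ?thesis using two_plays[OF p1(1) p2(1)] \<open>k1 mod 4 = k2 mod 4\<close> by blast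
    next
      case False
      then have "k2 < k1" using ne by simp
      then show ?thesis using two_plays[OF p2(1) p1(1)] \<open>k1 mod 4 = k2 mod 4\<close> by simp
    qed
    then have "card (H N c) \<le> 5 \<or> card (H N (c+2)) \<le> 5" using q1 by (elim disjE) simp_all
    then show False using c7 c13 by linarith
  next
    case False
    then have "(k1 mod 4 = c \<and> k2 mod 4 = c + 2) \<or> (k1 mod 4 = c + 2 \<and> k2 mod 4 = c)" using q1 q2 by auto
    then have "card (H N c) \<le> 6 \<and> card (H N (c+2)) \<le> 6" using l1 l2 by (elim disjE conjE) simp_all
    then show False using c13 by linarith
  qed
qed

lemma team_none:
  assumes c: "c < 2" and c14: "card (H N c) + card (H N (c+2)) = 14"
  shows "\<not> (play k \<and> k mod 2 = c)"
proof
  assume p: "play k \<and> k mod 2 = c"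
  have c7: "card (H N c) \<le> 7" "card (H N (c+2)) \<le> 7" using team_card[OF c] by auto
  have q: "k mod 4 = c \<or> k mod 4 = c + 2" using member p c by blast
  have "card (H N (k mod 4)) \<le> 6" using play_le6 p by blast
  then have "card (H N c) \<le> 6 \<or> card (H N (c+2)) \<le> 6" using q by (elim disjE) simp_all
  then show False using c7 c14 by linarith
qed

lemma Kfact:
  assumes c: "c < 2" and c13: "13 \<le> card (H N c) + card (H N (c+2))"
    and pj: "play j" "j mod 2 = c" and x: "x \<in> X c" and m: "1 \<le> m" "m \<le> N" and e: "x \<in> ends (ss ! m)"
  shows "m = j \<or> m = Suc j"
proof -
  have uniq: "\<And>k. play k \<Longrightarrow> k mod 2 = c \<Longrightarrow> k = j"
  proof -
    fix k assume "play k" "k mod 2 = c"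
    then show "k = j" by (rule team_one[OF c c13 _ _ pj(1) pj(2)])
  qed
  have sn: "(m mod 2 = c \<and> play m) \<or> (m mod 2 \<noteq> c \<and> play (m - 1))" using seen[OF c x m(1) m(2) e] .
  show ?thesis
  proof (cases "m mod 2 = c")
    case True
    then have "play m" using sn by simp
    then have "m = j" using uniq True by simp
    then show ?thesis by simp
  next
    case False
    then have pm: "play (m - 1)" using sn by simp
    obtain k where k: "m = Suc k" using m(1) by (cases m) auto
    have "k mod 2 = c" using False k c by presburger
    then have "(m - 1) mod 2 = c" using k by simp
    then have "m - 1 = j" using uniq pm by simp
    then show ?thesis using k by simp
  qed
qed

lemma final_l:
  obtains l r where "snd (ss ! N) = Some (l,r)" "\<forall>p<4. \<forall>x\<in>H N p. l \<notin> nums x \<and> r \<notin> nums x" "l \<le> 6"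
proof -
  obtain l r where lr: "snd (ss ! N) = Some (l,r)" "\<forall>p<4. \<forall>x\<in>H N p. l \<notin> nums x \<and> r \<notin> nums x"
    using final by blast
  have "l \<le> 6" using le6[of N] ends_Some[OF lr(1)] by simp
  then show ?thesis using that lr by blast
qed

lemma tile_with:
  assumes l: "snd (ss ! N) = Some (l,r)" "\<forall>p<4. \<forall>x\<in>H N p. l \<notin> nums x \<and> r \<notin> nums x" "l \<le> 6"
    and b: "b \<le> 6" and c: "c < 2"
  shows "(min l b, max l b) \<in> tiles \<and> (min l b, max l b) \<notin> H N c \<and> (min l b, max l b) \<notin> H N (c+2)
     \<and> b \<in> nums (min l b, max l b)"
proof -
  have ln: "l \<in> nums (min l b, max l b)" "b \<in> nums (min l b, max l b)" unfolding nums_def by (auto simp: min_def max_def)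
  have c4: "c < 4" "c + 2 < 4" using c by arith+
  have "(min l b, max l b) \<notin> H N c" using l(2) c4(1) ln(1) by blast
  moreover have "(min l b, max l b) \<notin> H N (c+2)" using l(2) c4(2) ln(1) by blast
  moreover have "(min l b, max l b) \<in> tiles" unfolding tiles_def using l(3) b by auto
  ultimately show ?thesis using ln by blast
qed


lemma par: "1 \<le> m \<Longrightarrow> m mod 2 \<noteq> c \<Longrightarrow> c < 2 \<Longrightarrow> (m - 1) mod 2 = (c::nat)"
proof -
  assume a: "1 \<le> m" "m mod 2 \<noteq> c" "c < 2"
  obtain k where k: "m = Suc k" using a(1) by (cases m) auto
  have "k mod 2 = c" using a(2,3) k by presburger
  then show ?thesis using k by simp
qed

lemma Xtile:
  assumes c: "c < 2" and c13: "13 \<le> card (H N c) + card (H N (c+2))"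
  shows "\<exists>t0\<in>tiles. t0 \<notin> H N c \<and> t0 \<notin> H N (c+2) \<and> X c \<subseteq> nums t0"
proof -
  obtain l r where lr: "snd (ss ! N) = Some (l,r)" "\<forall>p<4. \<forall>x\<in>H N p. l \<notin> nums x \<and> r \<notin> nums x" "l \<le> 6"
    by (rule final_l)
  note tw = tile_with[OF lr _ c]
  show ?thesis
  proof (cases "\<exists>j. play j \<and> j mod 2 = c")
    case False
    have "X c = {}"
    proof (rule ccontr)
      assume "X c \<noteq> {}"
      then obtain x where x: "x \<in> X c" by blast
      obtain m where m: "1 \<le> m" "m \<le> N" "x \<in> ends (ss ! m)" using appears[OF c x] by blast
      have sn: "(m mod 2 = c \<and> play m) \<or> (m mod 2 \<noteq> c \<and> play (m - 1))" using seen[OF c x m] .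
      then show False
      proof
        assume "m mod 2 = c \<and> play m" then show False using False by blast
      next
        assume h: "m mod 2 \<noteq> c \<and> play (m - 1)"
        then have "(m - 1) mod 2 = c" using par m(1) c by blast
        then show False using False h by blast
      qed
    qed
    then show ?thesis using tw[of l] lr(3) by blast
  next
    case True
    then obtain j where pj: "play j" "j mod 2 = c" by blast
    have jN: "j < N" using pj unfolding play_def by simp
    note K = Kfact[OF c c13 pj]
    obtain y where y: "y \<in> H j (j mod 4)" "y \<notin> H (Suc j) (j mod 4)"
      "snd (ss ! j) = None \<longrightarrow> ends (ss ! Suc j) = nums y"
      "snd (ss ! j) \<noteq> None \<longrightarrow> (\<exists>a b w. ends (ss ! j) = {a,b} \<and> nums y = {a,w} \<and> ends (ss ! Suc j) = {w,b})"
      by (rule play_tileE[OF pj(1)])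
    have yT: "y \<in> tiles" using y(1) Htiles[of j "j mod 4"] jN by auto
    have yH: "y \<notin> H N c" "y \<notin> H N (c+2)" using gone[OF jN mod4 y(1) y(2)] c by auto
    have XS: "X c \<subseteq> ends (ss ! j) \<union> ends (ss ! Suc j)"
    proof
      fix x assume x: "x \<in> X c"
      obtain m where m: "1 \<le> m" "m \<le> N" "x \<in> ends (ss ! m)" using appears[OF c x] by blast
      have "m = j \<or> m = Suc j" using K[OF x m] .
      then show "x \<in> ends (ss ! j) \<union> ends (ss ! Suc j)" using m(3) by auto
    qed
    show ?thesis
    proof (cases "snd (ss ! j) = None")
      case True
      then have "X c \<subseteq> nums y" using XS y(3) ends_None[OF True] by simp
      then show ?thesis using yT yH by blast
    next
      case False
      then have "\<exists>a b w. ends (ss ! j) = {a,b} \<and> nums y = {a,w} \<and> ends (ss ! Suc j) = {w,b}" using y(4) by simp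
      then obtain a b w where abw: "ends (ss ! j) = {a,b}" "nums y = {a,w}" "ends (ss ! Suc j) = {w,b}" by blast
      show ?thesis
      proof (cases "b \<in> X c")
        case False
        then have "X c \<subseteq> nums y" using XS abw by auto
        then show ?thesis using yT yH by blast
      next
        case bX: True
        have "Suc j \<noteq> N" using notN[OF c bX] abw(3) by auto
        then have sjN: "Suc j < N" using jN by simp
        have ne1: "ends (ss ! Suc j) \<inter> ends (ss ! Suc (Suc j)) \<noteq> {}"
          using step_keep[OF stepk[OF sjN] Some_after[of "Suc j"]] sjN by simp
        have "b \<notin> ends (ss ! Suc (Suc j))"
        proof
          assume "b \<in> ends (ss ! Suc (Suc j))"
          then have "Suc (Suc j) = j \<or> Suc (Suc j) = Suc j" using K[OF bX, of "Suc (Suc j)"] sjN by simp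
          then show False by simp
        qed
        then have "w \<in> ends (ss ! Suc (Suc j))" using ne1 abw(3) by auto
        then have wX: "w \<notin> X c"
        proof -
          assume wi: "w \<in> ends (ss ! Suc (Suc j))"
          show "w \<notin> X c"
          proof
            assume "w \<in> X c"
            then have "Suc (Suc j) = j \<or> Suc (Suc j) = Suc j" using K[of w "Suc (Suc j)"] sjN wi by simp
            then show False by simp
          qed
        qed
        have j0: "j \<noteq> 0"
        proof
          assume "j = 0" then show False using False E0 by simp
        qed
        show ?thesis
        proof (cases "j = 1")
          case True
          have N0: "0 < N" using jN by simp
          have "fst (ss ! Suc 0) (0 mod 4) \<noteq> fst (ss ! 0) (0 mod 4)"
            using step_first[OF stepk[OF N0] E0] .
          then have p0: "play 0" unfolding play_def using N0 by simp
          obtain y0 where y0: "y0 \<in> H 0 (0 mod 4)" "y0 \<notin> H (Suc 0) (0 mod 4)"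
            "snd (ss ! 0) = None \<longrightarrow> ends (ss ! Suc 0) = nums y0"
            by (rule play_tileE[OF p0])
          have e1: "ends (ss ! 1) = nums y0" using y0(3) E0 by simp
          have "X c \<subseteq> {a,b}" using XS abw wX by auto
          also have "{a,b} = nums y0" using abw(1) e1 True by simp
          finally have Xy0: "X c \<subseteq> nums y0" .
          have y0T: "y0 \<in> tiles" using y0(1) H0[of 0] by auto
          have y0H: "y0 \<notin> H N c" "y0 \<notin> H N (c+2)" using gone[OF N0 _ y0(1) y0(2)] c by auto
          show ?thesis using Xy0 y0T y0H by blast
        next
          case False
          then have j2: "2 \<le> j" using j0 by arith
          define i where "i = j - 1"
          have i: "Suc i = j" "1 \<le> i" "i < N" using j2 jN unfolding i_def by auto
          have ne0: "ends (ss ! i) \<inter> ends (ss ! Suc i) \<noteq> {}"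
            using step_keep[OF stepk[OF i(3)] Some_after[OF i(2)]] i(3) by simp
          have "b \<notin> ends (ss ! i)"
          proof
            assume "b \<in> ends (ss ! i)"
            then have "i = j \<or> i = Suc j" using K[OF bX i(2)] i(3) by simp
            then show False using i(1) by simp
          qed
          then have "a \<in> ends (ss ! i)" using ne0 abw(1) i(1) by auto
          then have aX: "a \<notin> X c"
          proof -
            assume ai: "a \<in> ends (ss ! i)"
            show "a \<notin> X c"
            proof
              assume "a \<in> X c"
              then have "i = j \<or> i = Suc j" using K[of a i] i ai by simp
              then show False using i(1) by simp
            qed
          qed
          have "X c \<subseteq> {b}" using XS abw wX aX by auto
          moreover have b6: "b \<le> 6" using X_le6[OF c bX] .
          ultimately show ?thesis using tw[OF b6] by blast
        qed
      qed
    qed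
  qed
qed


lemma X_empty:
  assumes c: "c < 2" and np: "\<not> (\<exists>j. play j \<and> j mod 2 = c)"
  shows "X c = {}"
proof (rule ccontr)
  assume "X c \<noteq> {}"
  then obtain x where x: "x \<in> X c" by blast
  obtain m where m: "1 \<le> m" "m \<le> N" "x \<in> ends (ss ! m)" using appears[OF c x] by blast
  have sn: "(m mod 2 = c \<and> play m) \<or> (m mod 2 \<noteq> c \<and> play (m - 1))" using seen[OF c x m] .
  then show False
  proof
    assume "m mod 2 = c \<and> play m" then show False using np by blast
  next
    assume h: "m mod 2 \<noteq> c \<and> play (m - 1)"
    then have "(m - 1) mod 2 = c" using par m(1) c by blast
    then show False using np h by blast
  qed
qed

lemma team_bound:
  assumes c: "c < 2"
  shows "sum pips (H N c) + sum pips (H N (c+2)) \<le> 107"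
proof -
  have c4: "c < 4" "c + 2 < 4" using c by arith+
  have sub: "H N c \<subseteq> tiles" "H N (c+2) \<subseteq> tiles" using Htiles c4 by auto
  have fin: "finite (H N c)" "finite (H N (c+2))" using finH c4 by auto
  have dj: "H N c \<inter> H N (c+2) = {}"
  proof -
    have "H N c \<subseteq> H 0 c" "H N (c+2) \<subseteq> H 0 (c+2)" using mono[of 0 N] by auto
    moreover have "H 0 c \<inter> H 0 (c+2) = {}" using disj0[OF c4] by simp
    ultimately show ?thesis by blast
  qed
  show ?thesis
  proof (cases "card (H N c) + card (H N (c+2)) \<le> 12")
    case True
    have "sum pips (H N c \<union> H N (c+2)) \<le> 7 * card (H N c \<union> H N (c+2)) + 22"
      using small_bound sub by simp
    then show ?thesis using True sum.union_disjoint[OF fin dj, of pips] card_Un_disjoint[OF fin dj] by simp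
  next
    case False
    then have c13: "13 \<le> card (H N c) + card (H N (c+2))" by simp
    obtain l r where lr: "snd (ss ! N) = Some (l,r)" "\<forall>p<4. \<forall>x\<in>H N p. l \<notin> nums x \<and> r \<notin> nums x" "l \<le> 6"
      by (rule final_l)
    have ea: "l \<notin> Av (H N c)" "l \<notin> Av (H N (c+2))" using lr(2) c4 unfolding Av_def by blast+
    have c7: "card (H N c) \<le> 7" "card (H N (c+2)) \<le> 7" using team_card[OF c] by auto
    have c14: "card (H N c) + card (H N (c+2)) = 14 \<longrightarrow> Av (H N c) \<inter> Av (H N (c+2)) = {}"
    proof
      assume "card (H N c) + card (H N (c+2)) = 14"
      then have "\<not> (\<exists>j. play j \<and> j mod 2 = c)" using team_none[OF c] by blast
      then show "Av (H N c) \<inter> Av (H N (c+2)) = {}" using X_empty[OF c] unfolding X_def by blast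
    qed
    obtain t0 where t0: "t0 \<in> tiles" "t0 \<notin> H N c" "t0 \<notin> H N (c+2)" "X c \<subseteq> nums t0"
      using Xtile[OF c c13] by blast
    show ?thesis
      by (rule CL[OF lr(3) sub dj ea c7 c13 c14 t0(1) t0(2) t0(3)]) (use t0(4) in \<open>simp add: X_def\<close>)
  qed
qed

lemma upper: "winner_points (last ss) = Some pts \<Longrightarrow> pts \<le> 107"
proof -
  assume wp: "winner_points (last ss) = Some pts"
  have last: "last ss = ss ! N" using ne unfolding N_def by (simp add: last_conv_nth)
  have A: "team_pips (H N) {0, 2} \<le> 107"
  proof -
    have "team_pips (H N) {0, 2} = sum pips (H N 0) + sum pips (H N 2)" unfolding team_pips_def by simp
    moreover have e: "(0::nat) + 2 = 2" by simp
    have "sum pips (H N 0) + sum pips (H N 2) \<le> 107" by (rule team_bound[of 0, unfolded e]) simp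
    ultimately show ?thesis by linarith
  qed
  have B: "team_pips (H N) {1, 3} \<le> 107"
  proof -
    have "team_pips (H N) {1, 3} = sum pips (H N 1) + sum pips (H N 3)" unfolding team_pips_def by simp
    moreover have e: "(1::nat) + 2 = 3" by simp
    have "sum pips (H N 1) + sum pips (H N 3) \<le> 107" by (rule team_bound[of 1, unfolded e]) simp
    ultimately show ?thesis by linarith
  qed
  show ?thesis using wp A B unfolding winner_points_def last Let_def by (auto split: if_splits)
qed

end



definition H0 :: "nat \<Rightarrow> tile set" where
  "H0 = (\<lambda>p. if p = 0 then {(0,0),(1,3),(0,4),(0,5),(0,2),(1,1),(1,2)} else if p = 1 then {(5,6),(6,6),(5,5),(2,6),(1,6),(2,5),(1,5)} else if p = 2 then {(0,1),(0,3),(2,4),(0,6),(1,4),(2,2),(2,3)} else if p = 3 then {(3,3),(3,4),(3,5),(3,6),(4,4),(4,5),(4,6)} else {})"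

definition w0 :: state where "w0 = (H0, None)"

definition w1 :: state where "w1 = ((fst w0)(0 := fst w0 0 - {(0,0)}), Some (0,0))"

definition w2 :: state where "w2 = w1"

definition w3 :: state where "w3 = ((fst w2)(2 := fst w2 2 - {(0,1)}), Some (1,0))"

definition w4 :: state where "w4 = w3"

definition w5 :: state where "w5 = ((fst w4)(0 := fst w4 0 - {(1,3)}), Some (3,0))"

definition w6 :: state where "w6 = w5"

definition w7 :: state where "w7 = ((fst w6)(2 := fst w6 2 - {(0,3)}), Some (0,0))"

definition w8 :: state where "w8 = w7"

definition w9 :: state where "w9 = ((fst w8)(0 := fst w8 0 - {(0,4)}), Some (4,0))"

definition w10 :: state where "w10 = w9"

definition w11 :: state where "w11 = ((fst w10)(2 := fst w10 2 - {(2,4)}), Some (2,0))"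

definition w12 :: state where "w12 = w11"

definition w13 :: state where "w13 = ((fst w12)(0 := fst w12 0 - {(0,5)}), Some (2,5))"

definition w14 :: state where "w14 = ((fst w13)(1 := fst w13 1 - {(5,6)}), Some (2,6))"

definition w15 :: state where "w15 = ((fst w14)(2 := fst w14 2 - {(0,6)}), Some (2,0))"

definition w16 :: state where "w16 = w15"

definition w17 :: state where "w17 = ((fst w16)(0 := fst w16 0 - {(0,2)}), Some (0,0))"

lemmas wdefs = w0_def w1_def w2_def w3_def w4_def w5_def w6_def w7_def w8_def w9_def w10_def
  w11_def w12_def w13_def w14_def w15_def w16_def w17_def H0_def

lemma wstep_first: "snd s = None \<Longrightarrow> x \<in> fst s p \<Longrightarrow>
   s' = ((fst s)(p := fst s p - {x}), Some (fst x, snd x)) \<Longrightarrow> step p s s'"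
  unfolding step_def by auto

lemma wstep_L: "snd s = Some (l,r) \<Longrightarrow> x \<in> fst s p \<Longrightarrow> has_num l x \<Longrightarrow>
   s' = ((fst s)(p := fst s p - {x}), Some (other_num l x, r)) \<Longrightarrow> step p s s'"
  unfolding step_def by auto

lemma wstep_R: "snd s = Some (l,r) \<Longrightarrow> x \<in> fst s p \<Longrightarrow> has_num r x \<Longrightarrow>
   s' = ((fst s)(p := fst s p - {x}), Some (l, other_num r x)) \<Longrightarrow> step p s s'"
  unfolding step_def by auto

lemma wstep_P: "snd s = Some (l,r) \<Longrightarrow> (\<forall>x\<in>fst s p. \<not> has_num l x \<and> \<not> has_num r x) \<Longrightarrow>
   s' = s \<Longrightarrow> step p s s'"
  unfolding step_def by auto

definition wss :: "state list" where
  "wss = [w0,w1,w2,w3,w4,w5,w6,w7,w8,w9,w10,w11,w12,w13,w14,w15,w16,w17]"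

lemma st0: "step 0 w0 w1" by (rule wstep_first[where x="(0,0)"]) (simp_all add: wdefs)
lemma st1: "step 1 w1 w2" by (rule wstep_P[where l=0 and r=0]) (simp_all add: wdefs has_num_def)
lemma st2: "step 2 w2 w3" by (rule wstep_L[where x="(0,1)" and l=0 and r=0]) (simp_all add: wdefs has_num_def other_num_def)
lemma st3: "step 3 w3 w4" by (rule wstep_P[where l=1 and r=0]) (simp_all add: wdefs has_num_def)
lemma st4: "step 0 w4 w5" by (rule wstep_L[where x="(1,3)" and l=1 and r=0]) (simp_all add: wdefs has_num_def other_num_def)
lemma st5: "step 1 w5 w6" by (rule wstep_P[where l=3 and r=0]) (simp_all add: wdefs has_num_def)
lemma st6: "step 2 w6 w7" by (rule wstep_L[where x="(0,3)" and l=3 and r=0]) (simp_all add: wdefs has_num_def other_num_def)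
lemma st7: "step 3 w7 w8" by (rule wstep_P[where l=0 and r=0]) (simp_all add: wdefs has_num_def)
lemma st8: "step 0 w8 w9" by (rule wstep_L[where x="(0,4)" and l=0 and r=0]) (simp_all add: wdefs has_num_def other_num_def)
lemma st9: "step 1 w9 w10" by (rule wstep_P[where l=4 and r=0]) (simp_all add: wdefs has_num_def)
lemma st10: "step 2 w10 w11" by (rule wstep_L[where x="(2,4)" and l=4 and r=0]) (simp_all add: wdefs has_num_def other_num_def)
lemma st11: "step 3 w11 w12" by (rule wstep_P[where l=2 and r=0]) (simp_all add: wdefs has_num_def)
lemma st12: "step 0 w12 w13" by (rule wstep_R[where x="(0,5)" and l=2 and r=0]) (simp_all add: wdefs has_num_def other_num_def)
lemma st13: "step 1 w13 w14" by (rule wstep_R[where x="(5,6)" and l=2 and r=5]) (simp_all add: wdefs has_num_def other_num_def)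
lemma st14: "step 2 w14 w15" by (rule wstep_R[where x="(0,6)" and l=2 and r=6]) (simp_all add: wdefs has_num_def other_num_def)
lemma st15: "step 3 w15 w16" by (rule wstep_P[where l=2 and r=0]) (simp_all add: wdefs has_num_def)
lemma st16: "step 0 w16 w17" by (rule wstep_L[where x="(0,2)" and l=2 and r=0]) (simp_all add: wdefs has_num_def other_num_def)

lemma all4: "(\<forall>p<(4::nat). P p) = (P 0 \<and> P 1 \<and> P 2 \<and> P 3)"
  by (auto simp: less_Suc_eq numeral_eq_Suc)

lemma all_less_Suc: "(\<forall>k<Suc n. P k) = ((\<forall>k<n. P k) \<and> P n)"
  by (auto simp: less_Suc_eq)

lemma all_upt: "(\<forall>k<n. P k) = (\<forall>k \<in> set [0..<n]. P k)"
  by auto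

lemma wA: "\<forall>k<17. step (k mod 4) (wss ! k) (wss ! (k + 1))"
  unfolding all_upt
  by (simp add: upt_rec wss_def st0 st1 st2 st3 st4 st5 st6 st7 st8 st9 st10 st11 st12 st13 st14 st15 st16 st1[unfolded One_nat_def] st5[unfolded One_nat_def] st9[unfolded One_nat_def] st13[unfolded One_nat_def] st2[unfolded numeral_2_eq_2] st6[unfolded numeral_2_eq_2] st10[unfolded numeral_2_eq_2] st14[unfolded numeral_2_eq_2])

lemma wB: "\<forall>k<18. \<forall>p<4. fst (wss ! k) p \<noteq> {}"
  unfolding all_upt all4
  by (simp add: upt_rec wss_def wdefs)

lemma wC: "\<forall>k<17. \<not> blocked (wss ! k)"
  unfolding all_upt blocked_def all4
  by (simp add: upt_rec wss_def wdefs has_num_def)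

lemma wD: "blocked (last wss)"
  unfolding blocked_def all4
  by (simp add: wss_def wdefs has_num_def)

lemma UN4: "(\<Union>p<(4::nat). A p) = A 0 \<union> A 1 \<union> A 2 \<union> A 3"
  by (auto simp: less_Suc_eq numeral_eq_Suc)
lemma wE1: "\<forall>p<4. H0 p \<subseteq> tiles \<and> card (H0 p) = 7"
  unfolding all4 tiles_set tileL_eval by (simp add: H0_def)
lemma wE2: "\<forall>p<4. \<forall>q<4. p \<noteq> q \<longrightarrow> H0 p \<inter> H0 q = {}"
  unfolding all4 by (simp add: H0_def)
lemma wE3: "(\<Union>p<4. H0 p) = tiles"
  unfolding tiles_set tileL_eval UN4
  by (rule equalityI) (simp_all add: H0_def)
lemma wE: "is_deal H0"
  unfolding is_deal_def using wE1 wE2 wE3 by blast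

lemma wF: "winner_points (last wss) = Some 107"
  by (simp add: winner_points_def team_pips_def wss_def wdefs pips_def)

theorem witness: "\<exists>ss. tranca_game ss \<and> winner_points (last ss) = Some 107"
proof -
  have "tranca_game wss"
    unfolding tranca_game_def using wA wB wC wD wE
    by (simp add: wss_def w0_def)
  then show ?thesis using wF by blast
qed


theorem mainTheorem1:
  shows "(\<exists>ss. tranca_game ss \<and> winner_points (last ss) = Some 107) \<and>
         (\<forall>ss pts. tranca_game ss \<and> winner_points (last ss) = Some pts \<longrightarrow> pts \<le> 107)"
proof
  show "\<exists>ss. tranca_game ss \<and> winner_points (last ss) = Some 107" by (rule witness)
next
  show "\<forall>ss pts. tranca_game ss \<and> winner_points (last ss) = Some pts \<longrightarrow> pts \<le> 107"
  proof (intro allI impI)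
    fix ss pts
    assume a: "tranca_game ss \<and> winner_points (last ss) = Some pts"
    then have "game ss" unfolding game_def by simp
    then show "pts \<le> 107" using game.upper a by blast
  qed
qed

end
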